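(* For every TRS $\mathcal{R}$, $\to_\mathcal{R}^*\cdot\to_{\mathsf{CPS}(\mathcal{R})}\cdot\to_\mathcal{R}^* \;=\; \to_\mathcal{R}^*\cdot\to_{\mathsf{PCPS}(\mathcal{R})}\cdot\to_\mathcal{R}^*$; in particular $\mathsf{CPS}(\mathcal{R})/\mathcal{R}$ is terminating if and only if $\mathsf{PCPS}(\mathcal{R})/\mathcal{R}$ is terminating.
   Context: A TRS is a set of rules $\ell\to r$ ($\ell\notin\mathcal{V}$, $\mathcal{V}ar(r)\subseteq\mathcal{V}ar(\ell)$). $\mathcal{P}/\mathcal{R}$ terminating means $\to_\mathcal{R}^*\cdot\to_\mathcal{P}\cdot\to_\mathcal{R}^*$ admits no infinite chain. Critical peak of $\mathcal{R}$: for variants $\ell_1\to r_1,\ell_2\to r_2$ of $\mathcal{R}$-rules without common variables, a function-symbol position $p$ of $\ell_2$, a most general unifier $\sigma$ of $\ell_1$ and $\ell_2|_p$, with $\ell_1\to r_1$ not a variant of $\ell_2\to r_2$ if $p$ is the root: source $s=\ell_2\sigma$, results $t=(\ell_2\sigma)[r_1\sigma]_p$, $u=r_2\sigma$. Parallel critical peak of $\mathcal{R}$: for variants $\ell\to r$ and $\ell_p\to r_p$ ($p\in P$) of $\mathcal{R}$-rules, pairwise variable-disjoint, $P$ a non-empty set of pairwise parallel function-symbol positions of $\ell$, $\sigma$ an mgu of $\{\ell_p\approx\ell|_p\}_{p\in P}$, and $\ell_\epsilon\to r_\epsilon$ not a variant of $\ell\to r$ if $P=\{\epsilon\}$: source $s=\ell\sigma$,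 results $t=(\ell\sigma)[r_p\sigma]_{p\in P}$, $u=r\sigma$. $\mathsf{CPS}(\mathcal{R})=\{s\to t,s\to u\mid (t,s,u)$ a critical peak$\}$ and $\mathsf{PCPS}(\mathcal{R})=\{s\to t,s\to u\mid(t,s,u)$ a parallel critical peak$\}$. *)

theory Defs
  imports Main
begin

datatype ('f, 'v) "term" = Var 'v | Fun 'f "('f, 'v) term list"

type_synonym ('f, 'v) rule = "('f, 'v) term \<times> ('f, 'v) term"
type_synonym ('f, 'v) trs = "('f, 'v) rule set"
type_synonym pos = "nat list"

fun vars_term :: "('f, 'v) term \<Rightarrow> 'v set" where
  "vars_term (Var x) = {x}"
| "vars_term (Fun f ts) = (\<Union>t \<in> set ts. vars_term t)"

definition vars_rule :: "('f, 'v) rule \<Rightarrow> 'v set" where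
  "vars_rule rl = vars_term (fst rl) \<union> vars_term (snd rl)"

fun subst_apply :: "('f, 'v) term \<Rightarrow> ('v \<Rightarrow> ('f, 'v) term) \<Rightarrow> ('f, 'v) term" where
  "subst_apply (Var x) \<sigma> = \<sigma> x"
| "subst_apply (Fun f ts) \<sigma> = Fun f (map (\<lambda>t. subst_apply t \<sigma>) ts)"

text \<open>Positions of a term (Dewey notation, 0-based argument indices).\<close>
fun is_pos :: "('f, 'v) term \<Rightarrow> pos \<Rightarrow> bool" where
  "is_pos t [] = True"
| "is_pos (Var x) (i # p) = False"
| "is_pos (Fun f ts) (i # p) = (i < length ts \<and> is_pos (ts ! i) p)"

fun subt_at :: "('f, 'v) term \<Rightarrow> pos \<Rightarrow> ('f, 'v) term" where
  "subt_at t [] = t"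
| "subt_at (Var x) (i # p) = Var x"
| "subt_at (Fun f ts) (i # p) = subt_at (ts ! i) p"

fun replace_at :: "('f, 'v) term \<Rightarrow> pos \<Rightarrow> ('f, 'v) term \<Rightarrow> ('f, 'v) term" where
  "replace_at t [] s = s"
| "replace_at (Var x) (i # p) s = Var x"
| "replace_at (Fun f ts) (i # p) s = Fun f (ts[i := replace_at (ts ! i) p s])"

definition is_Var_term :: "('f, 'v) term \<Rightarrow> bool" where
  "is_Var_term t = (\<exists>x. t = Var x)"

definition fun_poss :: "('f, 'v) term \<Rightarrow> pos set" where
  "fun_poss t = {p. is_pos t p \<and> \<not> is_Var_term (subt_at t p)}"

definition parallel_pos :: "pos \<Rightarrow> pos \<Rightarrow> bool" where
  "parallel_pos p q = ((\<nexists>r. q = p @ r) \<and> (\<nexists>r. p = q @ r))"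

definition wf_trs :: "('f, 'v) trs \<Rightarrow> bool" where
  "wf_trs R = (\<forall>(l, r) \<in> R. \<not> is_Var_term l \<and> vars_term r \<subseteq> vars_term l)"

definition rstep :: "('f, 'v) trs \<Rightarrow> ('f, 'v) term rel" where
  "rstep R = {(s, t). \<exists>l r p \<sigma>. (l, r) \<in> R \<and> is_pos s p \<and>
      subt_at s p = subst_apply l \<sigma> \<and> t = replace_at s p (subst_apply r \<sigma>)}"

definition relstep :: "('f, 'v) trs \<Rightarrow> ('f, 'v) trs \<Rightarrow> ('f, 'v) term rel" where
  "relstep P R = (rstep R)\<^sup>* O rstep P O (rstep R)\<^sup>*"

definition SN_rel :: "'a rel \<Rightarrow> bool" where
  "SN_rel S = (\<nexists>f. \<forall>i. (f i, f (Suc i)) \<in> S)"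

definition rel_terminating :: "('f, 'v) trs \<Rightarrow> ('f, 'v) trs \<Rightarrow> bool" where
  "rel_terminating P R = SN_rel (relstep P R)"

definition is_variant :: "('f, 'v) rule \<Rightarrow> ('f, 'v) rule \<Rightarrow> bool" where
  "is_variant rl' rl = (\<exists>\<pi>. bij \<pi> \<and> fst rl' = subst_apply (fst rl) (Var \<circ> \<pi>)
                              \<and> snd rl' = subst_apply (snd rl) (Var \<circ> \<pi>))"

definition variant_of :: "('f, 'v) trs \<Rightarrow> ('f, 'v) rule \<Rightarrow> bool" where
  "variant_of R rl' = (\<exists>rl \<in> R. is_variant rl' rl)"

definition is_unifier :: "('v \<Rightarrow> ('f, 'v) term) \<Rightarrow> (('f, 'v) term \<times> ('f, 'v) term) set \<Rightarrow> bool" where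
  "is_unifier \<sigma> E = (\<forall>(s, t) \<in> E. subst_apply s \<sigma> = subst_apply t \<sigma>)"

definition is_mgu :: "('v \<Rightarrow> ('f, 'v) term) \<Rightarrow> (('f, 'v) term \<times> ('f, 'v) term) set \<Rightarrow> bool" where
  "is_mgu \<sigma> E = (is_unifier \<sigma> E \<and>
     (\<forall>\<tau>. is_unifier \<tau> E \<longrightarrow> (\<exists>\<delta>. \<forall>x. \<tau> x = subst_apply (\<sigma> x) \<delta>)))"

definition critical_peak :: "('f, 'v) trs \<Rightarrow> ('f, 'v) term \<Rightarrow> ('f, 'v) term \<Rightarrow> ('f, 'v) term \<Rightarrow> bool" where
  "critical_peak R t s u = (\<exists>l1 r1 l2 r2 p \<sigma>.
      variant_of R (l1, r1) \<and> variant_of R (l2, r2) \<and>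
      vars_rule (l1, r1) \<inter> vars_rule (l2, r2) = {} \<and>
      p \<in> fun_poss l2 \<and> is_mgu \<sigma> {(l1, subt_at l2 p)} \<and>
      (p = [] \<longrightarrow> \<not> is_variant (l1, r1) (l2, r2)) \<and>
      s = subst_apply l2 \<sigma> \<and>
      t = replace_at (subst_apply l2 \<sigma>) p (subst_apply r1 \<sigma>) \<and>
      u = subst_apply r2 \<sigma>)"

text \<open>The rules \<open>\<ell>\<^sub>p \<rightarrow> r\<^sub>p\<close> are given by the family \<open>rl p\<close>; the parallel replacement
  \<open>(\<ell>\<sigma>)[r\<^sub>p\<sigma>]\<^sub>p\<^sub>\<in>\<^sub>P\<close> is computed by successive replacement along an enumeration of P
  (independent of the enumeration since positions in P are pairwise parallel).\<close>
definition parallel_critical_peak :: "('f, 'v) trs \<Rightarrow> ('f, 'v) term \<Rightarrow> ('f, 'v) term \<Rightarrow> ('f, 'v) term \<Rightarrow> bool" where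
  "parallel_critical_peak R t s u = (\<exists>l r P rl \<sigma> ps.
      variant_of R (l, r) \<and> (\<forall>p \<in> P. variant_of R (rl p)) \<and>
      (\<forall>p \<in> P. vars_rule (rl p) \<inter> vars_rule (l, r) = {}) \<and>
      (\<forall>p \<in> P. \<forall>q \<in> P. p \<noteq> q \<longrightarrow> vars_rule (rl p) \<inter> vars_rule (rl q) = {}) \<and>
      P \<noteq> {} \<and> P \<subseteq> fun_poss l \<and>
      (\<forall>p \<in> P. \<forall>q \<in> P. p \<noteq> q \<longrightarrow> parallel_pos p q) \<and>
      is_mgu \<sigma> {(fst (rl p), subt_at l p) | p. p \<in> P} \<and>
      (P = {[]} \<longrightarrow> \<not> is_variant (rl []) (l, r)) \<and>
      set ps = P \<and> distinct ps \<and>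
      s = subst_apply l \<sigma> \<and>
      t = foldr (\<lambda>p v. replace_at v p (subst_apply (snd (rl p)) \<sigma>)) ps (subst_apply l \<sigma>) \<and>
      u = subst_apply r \<sigma>)"

definition CPS :: "('f, 'v) trs \<Rightarrow> ('f, 'v) trs" where
  "CPS R = {(s, t). \<exists>u. critical_peak R t s u} \<union> {(s, u). \<exists>t. critical_peak R t s u}"

definition PCPS :: "('f, 'v) trs \<Rightarrow> ('f, 'v) trs" where
  "PCPS R = {(s, t). \<exists>u. parallel_critical_peak R t s u} \<union> {(s, u). \<exists>t. parallel_critical_peak R t s u}"

end

theory Submission
  imports Defs
begin

lemma subst_subst: "subst_apply (subst_apply t s1) s2 = subst_apply t (\<lambda>x. subst_apply (s1 x) s2)"
  by (induct t) auto

lemma subst_Var[simp]: "subst_apply t Var = t"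
  by (induct t) (auto simp: map_idI)

lemma subst_cong: "(\<And>x. x \<in> vars_term t \<Longrightarrow> s1 x = s2 x) \<Longrightarrow> subst_apply t s1 = subst_apply t s2"
  by (induct t) auto

lemma finite_vars[simp]: "finite (vars_term t)"
  by (induct t) auto

fun tsz :: "('f,'v) term \<Rightarrow> nat" where
  "tsz (Var x) = 1"
| "tsz (Fun f ts) = Suc (sum_list (map tsz ts))"

lemma tsz_pos: "tsz t > 0" by (cases t) auto

lemma occurs_le: "x \<in> vars_term t \<Longrightarrow> tsz (subst_apply t \<tau>) \<ge> tsz (\<tau> x)"
proof (induct t)
  case (Var y) then show ?case by simp
next
  case (Fun f ts)
  then obtain t where t: "t \<in> set ts" "x \<in> vars_term t" by auto
  have "tsz (\<tau> x) \<le> tsz (subst_apply t \<tau>)" using Fun t by auto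
  also have "\<dots> \<le> sum_list (map tsz (map (\<lambda>t. subst_apply t \<tau>) ts))"
    using t(1) by (intro member_le_sum_list) auto
  finally show ?case by simp
qed

lemma occurs_lt: "x \<in> vars_term t \<Longrightarrow> t \<noteq> Var x \<Longrightarrow> tsz (subst_apply t \<tau>) > tsz (\<tau> x)"
proof (cases t)
  case (Var y) then show "x \<in> vars_term t \<Longrightarrow> t \<noteq> Var x \<Longrightarrow> ?thesis" by simp
next
  case (Fun f ts)
  assume "x \<in> vars_term t"
  then obtain s where s: "s \<in> set ts" "x \<in> vars_term s" using Fun by auto
  have "tsz (\<tau> x) \<le> tsz (subst_apply s \<tau>)" using occurs_le s by metis
  also have "\<dots> \<le> sum_list (map tsz (map (\<lambda>t. subst_apply t \<tau>) ts))"
    using s(1) by (intro member_le_sum_list) auto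
  finally show ?thesis using Fun by simp
qed

definition unif :: "('v \<Rightarrow> ('f,'v) term) \<Rightarrow> (('f,'v) term \<times> ('f,'v) term) list \<Rightarrow> bool" where
  "unif \<tau> E = (\<forall>(a,b)\<in>set E. subst_apply a \<tau> = subst_apply b \<tau>)"

definition mgul :: "('v \<Rightarrow> ('f,'v) term) \<Rightarrow> (('f,'v) term \<times> ('f,'v) term) list \<Rightarrow> bool" where
  "mgul \<sigma> E = (unif \<sigma> E \<and> (\<forall>\<tau>. unif \<tau> E \<longrightarrow> (\<exists>\<delta>. \<forall>x. \<tau> x = subst_apply (\<sigma> x) \<delta>)))"

definition veqs :: "(('f,'v) term \<times> ('f,'v) term) list \<Rightarrow> 'v set" where
  "veqs E = (\<Union>(a,b)\<in>set E. vars_term a \<union> vars_term b)"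

definition esz :: "(('f,'v) term \<times> ('f,'v) term) list \<Rightarrow> nat" where
  "esz E = sum_list (map (\<lambda>(a,b). tsz a + tsz b) E)"

lemma finite_veqs[simp]: "finite (veqs E)"
  unfolding veqs_def by auto

abbreviation M :: "((('f,'v) term \<times> ('f,'v) term) list \<times> (('f,'v) term \<times> ('f,'v) term) list) set" where
  "M \<equiv> measures [\<lambda>E. card (veqs E), esz]"

lemma M_intro: "veqs E2 \<subseteq> veqs E \<Longrightarrow> esz E2 < esz E \<Longrightarrow> (E2, E) \<in> M"
proof -
  assume a: "veqs E2 \<subseteq> veqs E" "esz E2 < esz E"
  have "card (veqs E2) \<le> card (veqs E)" by (rule card_mono[OF finite_veqs a(1)])
  then show ?thesis using a(2) by auto
qed

lemma var_case:
  fixes b :: "('f,'v) term" and E' :: "(('f,'v) term \<times> ('f,'v) term) list"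
  assumes IH: "\<And>E2 \<tau>. (E2, (Var x, b) # E') \<in> M \<Longrightarrow> unif \<tau> E2 \<Longrightarrow> \<exists>\<sigma>. mgul \<sigma> E2"
    and u: "unif \<tau> ((Var x, b) # E')"
  shows "\<exists>\<sigma>. mgul \<sigma> ((Var x, b) # E')"
proof (cases "b = Var x")
  case True
  have "(E', (Var x, b) # E') \<in> M"
    using tsz_pos[of b] by (intro M_intro) (auto simp: veqs_def esz_def)
  moreover have "unif \<tau> E'" using u by (simp add: unif_def)
  ultimately obtain \<sigma> where "mgul \<sigma> E'" using IH by blast
  then have "mgul \<sigma> ((Var x, b) # E')" using True by (simp add: mgul_def unif_def)
  then show ?thesis by blast
next
  case False
  have nx: "x \<notin> vars_term b"
  proof
    assume "x \<in> vars_term b"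
    from occurs_lt[OF this False, of \<tau>] u show False by (simp add: unif_def)
  qed
  define sx where "sx = Var(x := b)"
  define E2 where "E2 = map (\<lambda>(c,d). (subst_apply c sx, subst_apply d sx)) E'"
  have vsx: "vars_term (subst_apply c sx) \<subseteq> vars_term c - {x} \<union> vars_term b" for c
    by (induct c) (auto simp: sx_def)
  have "veqs E2 \<subseteq> veqs ((Var x, b) # E') - {x}"
    using vsx nx by (fastforce simp: veqs_def E2_def)
  have "card (veqs E2) < card (veqs ((Var x, b) # E'))"
  proof (rule psubset_card_mono[OF finite_veqs])
    show "veqs E2 \<subset> veqs ((Var x, b) # E')"
      using \<open>veqs E2 \<subseteq> veqs ((Var x, b) # E') - {x}\<close> by (auto simp: veqs_def)
  qed
  then have mE2: "(E2, (Var x, b) # E') \<in> M" by simp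
  have key: "unif \<tau>' ((Var x, b) # E') \<longleftrightarrow> \<tau>' x = subst_apply b \<tau>' \<and> unif \<tau>' E2" for \<tau>'
  proof -
    have "\<tau>' x = subst_apply b \<tau>' \<Longrightarrow> subst_apply (subst_apply c sx) \<tau>' = subst_apply c \<tau>'" for c
      by (simp add: subst_subst, rule subst_cong) (auto simp: sx_def)
    then show ?thesis by (auto simp: unif_def E2_def)
  qed
  obtain \<theta> where th: "mgul \<theta> E2" using IH[OF mE2] key u by blast
  define \<sigma> where "\<sigma> = (\<lambda>y. subst_apply (sx y) \<theta>)"
  have "subst_apply b sx = subst_apply b Var"
    by (rule subst_cong) (use nx in \<open>auto simp: sx_def\<close>)
  then have sb: "subst_apply b sx = b" by simp
  have sc: "subst_apply c \<sigma> = subst_apply (subst_apply c sx) \<theta>" for c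
    by (simp add: subst_subst \<sigma>_def)
  have u1: "unif \<sigma> ((Var x, b) # E')"
    unfolding unif_def
  proof (intro ballI, clarify)
    fix c d assume "(c, d) \<in> set ((Var x, b) # E')"
    then have "(c, d) = (Var x, b) \<or> (c, d) \<in> set E'" by simp
    then show "subst_apply c \<sigma> = subst_apply d \<sigma>"
    proof
      assume "(c, d) = (Var x, b)"
      then show ?thesis using sb sc[of b] by (simp add: \<sigma>_def sx_def)
    next
      assume "(c, d) \<in> set E'"
      then have "(subst_apply c sx, subst_apply d sx) \<in> set E2" by (force simp: E2_def)
      then show ?thesis using th sc unfolding mgul_def unif_def by auto
    qed
  qed
  have "\<exists>\<delta>. \<forall>y. \<tau>' y = subst_apply (\<sigma> y) \<delta>" if u': "unif \<tau>' ((Var x, b) # E')" for \<tau>'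
  proof -
    from u' key have tx: "\<tau>' x = subst_apply b \<tau>'" and "unif \<tau>' E2" by auto
    then obtain \<delta> where d: "\<forall>y. \<tau>' y = subst_apply (\<theta> y) \<delta>" using th unfolding mgul_def by blast
    have "\<tau>' y = subst_apply (\<sigma> y) \<delta>" for y
    proof -
      have "subst_apply (\<sigma> y) \<delta> = subst_apply (sx y) \<tau>'"
        unfolding \<sigma>_def subst_subst using d by (metis)
      also have "\<dots> = \<tau>' y" using tx by (simp add: sx_def)
      finally show ?thesis by simp
    qed
    then show ?thesis by blast
  qed
  with u1 show ?thesis unfolding mgul_def by blast
qed

lemma unif_swap: "unif \<tau> ((b, a) # E) = unif \<tau> ((a, b) # E)"
  by (auto simp: unif_def)
lemma mgul_swap: "mgul \<sigma> ((b, a) # E) = mgul \<sigma> ((a, b) # E)"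
  by (simp add: mgul_def unif_swap)
lemma M_swap: "((E2, (b, a) # E) \<in> M) = ((E2, (a, b) # E) \<in> M)"
  by (simp add: veqs_def esz_def Un_commute add.commute)

lemma map_eq_zip: "length as = length bs \<Longrightarrow>
   (map f as = map f bs) = (\<forall>(c, d)\<in>set (zip as bs). f c = f d)"
  by (induct as bs rule: list_induct2) auto

lemma veqs_zip: "veqs (zip as bs) \<subseteq> (\<Union>t\<in>set as. vars_term t) \<union> (\<Union>t\<in>set bs. vars_term t)"
  by (auto simp: veqs_def dest: set_zip_leftD set_zip_rightD)

lemma esz_zip: "length as = length bs \<Longrightarrow>
   esz (zip as bs) = sum_list (map tsz as) + sum_list (map tsz bs)"
  by (induct as bs rule: list_induct2) (auto simp: esz_def)

lemma mgu_exists: "unif \<tau> E \<Longrightarrow> \<exists>\<sigma>. mgul \<sigma> E"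
proof (induction E arbitrary: \<tau> rule: wf_induct[OF wf_measures[of "[\<lambda>E. card (veqs E), esz]"]])
  case (1 E)
  show ?case
  proof (cases E)
    case Nil
    have "mgul Var E" using Nil by (auto simp: mgul_def unif_def)
    then show ?thesis by blast
  next
    case (Cons ab E')
    obtain a b where ab: "ab = (a, b)" by force
    show ?thesis
    proof (cases a)
      case (Var x)
      show ?thesis unfolding Cons ab Var
        by (rule var_case[where \<tau> = \<tau>]) (use 1 Cons ab Var in auto)
    next
      case (Fun f as)
      show ?thesis
      proof (cases b)
        case (Var x)
        have IHs: "\<exists>\<sigma>. mgul \<sigma> E2" if h: "(E2, (Var x, a) # E') \<in> M" "unif \<tau>' E2" for E2 \<tau>'
        proof -
          have "(E2, E) \<in> M" using M_swap[of E2 a "Var x" E'] h(1) Cons ab Var by simp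
          then show ?thesis using 1(1) h(2) by blast
        qed
        have "unif \<tau> ((Var x, a) # E')" using 1(2) unif_swap[of \<tau> "Var x" a E'] unfolding Cons ab Var by simp
        from var_case[OF IHs this] have "\<exists>\<sigma>. mgul \<sigma> ((Var x, a) # E')" .
        then show ?thesis unfolding Cons ab Var using mgul_swap[of _ "Var x" a E'] by simp
      next
        case (Fun g bs)
        note fa = \<open>a = Fun f as\<close>
        from 1(2) have fg: "f = g" and len: "length as = length bs"
          unfolding Cons ab fa Fun unif_def by (auto dest: map_eq_imp_length_eq)
        define E2 where "E2 = zip as bs @ E'"
        have eq: "unif \<tau>' E = unif \<tau>' E2" for \<tau>'
          unfolding Cons ab fa Fun E2_def unif_def using fg len by (simp add: map_eq_zip[OF len] ball_Un)
        have "(E2, E) \<in> M"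
          apply (rule M_intro)
          using veqs_zip[of as bs] esz_zip[OF len]
           apply (auto simp: E2_def Cons ab fa Fun veqs_def esz_def)
          done
        then obtain \<sigma> where "mgul \<sigma> E2" using 1(1) 1(2) eq by blast
        then have "mgul \<sigma> E" by (simp add: mgul_def eq)
        then show ?thesis by blast
      qed
    qed
  qed
qed


lemma single_mgu: "is_unifier \<tau> {(s, t)} \<Longrightarrow> \<exists>\<sigma>. is_mgu \<sigma> {(s, t)}"
proof -
  assume "is_unifier \<tau> {(s, t)}"
  then have "unif \<tau> [(s, t)]" by (simp add: is_unifier_def unif_def)
  then obtain \<sigma> where "mgul \<sigma> [(s, t)]" using mgu_exists by blast
  then have "is_mgu \<sigma> {(s, t)}" by (simp add: is_mgu_def mgul_def is_unifier_def unif_def)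
  then show ?thesis by blast
qed

lemma pos_subst:
  "is_pos t p \<Longrightarrow> is_pos (subst_apply t \<sigma>) p \<and> subt_at (subst_apply t \<sigma>) p = subst_apply (subt_at t p) \<sigma>
   \<and> replace_at (subst_apply t \<sigma>) p (subst_apply x \<sigma>) = subst_apply (replace_at t p x) \<sigma>"
proof (induct p arbitrary: t)
  case Nil then show ?case by simp
next
  case (Cons i p)
  then obtain f ts where t: "t = Fun f ts" and i: "i < length ts" "is_pos (ts ! i) p"
    by (cases t) auto
  then show ?case using Cons(1)[OF i(2)] by (auto simp: map_update)
qed

lemma replace_same: "is_pos t p \<Longrightarrow> is_pos (replace_at t p s) p \<and> subt_at (replace_at t p s) p = s
   \<and> replace_at (replace_at t p s) p s' = replace_at t p s' \<and> replace_at t p (subt_at t p) = t"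
proof (induct p arbitrary: t)
  case Nil then show ?case by simp
next
  case (Cons i p)
  then obtain f ts where t: "t = Fun f ts" and i: "i < length ts" "is_pos (ts ! i) p"
    by (cases t) auto
  then show ?case using Cons(1)[OF i(2)] by auto
qed

lemma pos_append: "is_pos t q \<Longrightarrow> is_pos (subt_at t q) p \<Longrightarrow> is_pos t (q @ p) \<and>
   subt_at t (q @ p) = subt_at (subt_at t q) p \<and>
   replace_at t (q @ p) x = replace_at t q (replace_at (subt_at t q) p x)"
proof (induct q arbitrary: t)
  case Nil then show ?case by simp
next
  case (Cons i q)
  then obtain f ts where t: "t = Fun f ts" and i: "i < length ts" "is_pos (ts ! i) q"
    by (cases t) auto
  then show ?case using Cons by auto
qed

lemma parallel_replace: "parallel_pos p q \<Longrightarrow> is_pos t q \<Longrightarrow>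
   is_pos (replace_at t p s) q \<and> subt_at (replace_at t p s) q = subt_at t q"
proof (induct p arbitrary: t q)
  case Nil then show ?case by (simp add: parallel_pos_def)
next
  case (Cons i p)
  then obtain j q' where q: "q = j # q'" by (cases q) (auto simp: parallel_pos_def)
  with Cons obtain f ts where t: "t = Fun f ts" and j: "j < length ts" "is_pos (ts ! j) q'"
    by (cases t) auto
  show ?case
  proof (cases "i = j")
    case True
    then have "parallel_pos p q'" using Cons(2) q by (auto simp: parallel_pos_def)
    then show ?thesis using Cons(1)[of q' "ts ! j"] True t q j by auto
  next
    case False
    then show ?thesis using t q j by auto
  qed
qed

lemma rstep_closed: "(a, b) \<in> rstep S \<Longrightarrow> is_pos w q \<Longrightarrow> subt_at w q = subst_apply a \<theta> \<Longrightarrow>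
   (w, replace_at w q (subst_apply b \<theta>)) \<in> rstep S"
proof -
  assume ab: "(a, b) \<in> rstep S" and w: "is_pos w q" "subt_at w q = subst_apply a \<theta>"
  then obtain l r p \<rho> where r: "(l, r) \<in> S" "is_pos a p" "subt_at a p = subst_apply l \<rho>"
    "b = replace_at a p (subst_apply r \<rho>)" unfolding rstep_def by blast
  note ps = pos_subst[OF r(2), of \<theta> "subst_apply r \<rho>"]
  have "is_pos (subt_at w q) p" using ps w by simp
  note pa = pos_append[OF w(1) this, of "subst_apply (subst_apply r \<rho>) \<theta>"]
  show ?thesis unfolding rstep_def
  proof (clarify, intro exI conjI)
    show "(l, r) \<in> S" by fact
    show "is_pos w (q @ p)" using pa by simp
    show "subt_at w (q @ p) = subst_apply l (\<lambda>x. subst_apply (\<rho> x) \<theta>)"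
      using pa ps w r(3) by (simp add: subst_subst)
    show "replace_at w q (subst_apply b \<theta>) = replace_at w (q @ p) (subst_apply r (\<lambda>x. subst_apply (\<rho> x) \<theta>))"
      using pa ps w r(4) by (simp add: subst_subst)
  qed
qed

lemma rsteps_closed: "(a, b) \<in> (rstep S)\<^sup>* \<Longrightarrow> is_pos w q \<Longrightarrow> subt_at w q = subst_apply a \<theta> \<Longrightarrow>
   (w, replace_at w q (subst_apply b \<theta>)) \<in> (rstep S)\<^sup>*"
proof (induct rule: rtrancl_induct)
  case base then show ?case using replace_same[of w q] by simp
next
  case (step b c)
  let ?W = "replace_at w q (subst_apply b \<theta>)"
  have "is_pos ?W q" "subt_at ?W q = subst_apply b \<theta>" using replace_same[OF step(4)] by auto
  from rstep_closed[OF step(2) this] have "(?W, replace_at ?W q (subst_apply c \<theta>)) \<in> rstep S" .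
  then show ?case using step replace_same[OF step(4)] by auto
qed


lemma foldr_par: "\<forall>q'\<in>set qs. parallel_pos q' q \<Longrightarrow> is_pos w q \<Longrightarrow>
  is_pos (foldr (\<lambda>q v. replace_at v q (g q)) qs w) q \<and>
  subt_at (foldr (\<lambda>q v. replace_at v q (g q)) qs w) q = subt_at w q"
  by (induct qs) (auto simp: parallel_replace)

lemma par_sym: "parallel_pos p q \<Longrightarrow> parallel_pos q p"
  by (auto simp: parallel_pos_def)

lemma foldr_steps: "distinct qs \<Longrightarrow> (\<forall>q\<in>set qs. \<forall>q'\<in>set qs. q \<noteq> q' \<longrightarrow> parallel_pos q q') \<Longrightarrow>
  (\<forall>q\<in>set qs. is_pos w q \<and> (subt_at w q, g q) \<in> rstep R) \<Longrightarrow>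
  (w, foldr (\<lambda>q v. replace_at v q (g q)) qs w) \<in> (rstep R)\<^sup>*"
proof (induct qs)
  case Nil then show ?case by simp
next
  case (Cons q qs)
  let ?W = "foldr (\<lambda>q v. replace_at v q (g q)) qs w"
  have IH: "(w, ?W) \<in> (rstep R)\<^sup>*" using Cons by auto
  have "\<forall>q'\<in>set qs. parallel_pos q' q" using Cons(2,3) by auto
  note fp = foldr_par[OF this, of w g]
  have "(?W, replace_at ?W q (subst_apply (g q) Var)) \<in> rstep R"
    using fp Cons(4) by (intro rstep_closed[of "subt_at w q" "g q"]) auto
  then show ?case using IH by simp
qed

lemma variant_step: "variant_of R rl \<Longrightarrow>
  (subst_apply (fst rl) \<sigma>, subst_apply (snd rl) \<sigma>) \<in> rstep R"
proof -
  assume "variant_of R rl"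
  then obtain l0 r0 \<pi> where "(l0, r0) \<in> R" "fst rl = subst_apply l0 (Var \<circ> \<pi>)"
    "snd rl = subst_apply r0 (Var \<circ> \<pi>)" unfolding variant_of_def is_variant_def by auto
  then show ?thesis unfolding rstep_def
    by (intro CollectI case_prodI exI[of _ l0] exI[of _ r0] exI[of _ "[]"]
        exI[of _ "\<lambda>x. subst_apply ((Var \<circ> \<pi>) x) \<sigma>"]) (auto simp: subst_subst)
qed

lemma cp_pcp: "critical_peak R t s u \<Longrightarrow> parallel_critical_peak R t s u"
proof -
  assume "critical_peak R t s u"
  then obtain l1 r1 l2 r2 p \<sigma> where c:
      "variant_of R (l1, r1)" "variant_of R (l2, r2)"
      "vars_rule (l1, r1) \<inter> vars_rule (l2, r2) = {}"
      "p \<in> fun_poss l2" "is_mgu \<sigma> {(l1, subt_at l2 p)}"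
      "(p = [] \<longrightarrow> \<not> is_variant (l1, r1) (l2, r2))"
      "s = subst_apply l2 \<sigma>"
      "t = replace_at (subst_apply l2 \<sigma>) p (subst_apply r1 \<sigma>)"
      "u = subst_apply r2 \<sigma>" unfolding critical_peak_def by (elim exE conjE) (rule that; assumption)
  have e: "{(fst ((\<lambda>_. (l1, r1)) q), subt_at l2 q) | q. q \<in> {p}} = {(l1, subt_at l2 p)}" by auto
  show ?thesis unfolding parallel_critical_peak_def
    apply (rule exI[of _ l2], rule exI[of _ r2], rule exI[of _ "{p}"], rule exI[of _ "\<lambda>_. (l1, r1)"],
        rule exI[of _ \<sigma>], rule exI[of _ "[p]"])
    using c e by auto
qed

lemma CPS_sub: "CPS R \<subseteq> PCPS R"
  unfolding CPS_def PCPS_def using cp_pcp by blast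

lemma rstep_mono: "S \<subseteq> T \<Longrightarrow> rstep S \<subseteq> rstep T"
  unfolding rstep_def by blast

lemma pcp_key: "parallel_critical_peak R t s u \<Longrightarrow>
  \<exists>c. (s, c) \<in> rstep (CPS R) \<and> (c, t) \<in> (rstep R)\<^sup>* \<and> (s, u) \<in> rstep (CPS R)"
proof -
  assume "parallel_critical_peak R t s u"
  then obtain l r P rl \<sigma> ps where c:
      "variant_of R (l, r)" "\<forall>p \<in> P. variant_of R (rl p)"
      "\<forall>p \<in> P. vars_rule (rl p) \<inter> vars_rule (l, r) = {}"
      "\<forall>p \<in> P. \<forall>q \<in> P. p \<noteq> q \<longrightarrow> vars_rule (rl p) \<inter> vars_rule (rl q) = {}"
      "P \<noteq> {}" "P \<subseteq> fun_poss l"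
      "\<forall>p \<in> P. \<forall>q \<in> P. p \<noteq> q \<longrightarrow> parallel_pos p q"
      "is_mgu \<sigma> {(fst (rl p), subt_at l p) | p. p \<in> P}"
      "(P = {[]} \<longrightarrow> \<not> is_variant (rl []) (l, r))"
      "set ps = P" "distinct ps"
      "s = subst_apply l \<sigma>"
      "t = foldr (\<lambda>p v. replace_at v p (subst_apply (snd (rl p)) \<sigma>)) ps (subst_apply l \<sigma>)"
      "u = subst_apply r \<sigma>" unfolding parallel_critical_peak_def by (elim exE conjE) (rule that; assumption)
  have "ps \<noteq> []" using c(5,10) by auto
  define p where "p = last ps"
  define qs where "qs = butlast ps"
  have ps: "ps = qs @ [p]" using \<open>ps \<noteq> []\<close> by (simp add: p_def qs_def)
  have pP: "p \<in> P" using c(10) ps by auto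
  have qsP: "set qs \<subseteq> P" using c(10) ps by auto
  have pq: "p \<notin> set qs" "distinct qs" using c(11) ps by auto
  obtain l1 r1 where rlp: "rl p = (l1, r1)" by force
  have posl: "is_pos l q" if "q \<in> P" for q using c(6) that by (auto simp: fun_poss_def)
  have uni: "subst_apply (fst (rl q)) \<sigma> = subst_apply (subt_at l q) \<sigma>" if "q \<in> P" for q
    using c(8) that unfolding is_mgu_def is_unifier_def by blast
  have "is_unifier \<sigma> {(l1, subt_at l p)}" using uni[OF pP] rlp by (simp add: is_unifier_def)
  then obtain \<sigma>' where mgu: "is_mgu \<sigma>' {(l1, subt_at l p)}" using single_mgu by blast
  then obtain \<delta> where d: "\<forall>x. \<sigma> x = subst_apply (\<sigma>' x) \<delta>"
    using \<open>is_unifier \<sigma> {(l1, subt_at l p)}\<close> unfolding is_mgu_def by blast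
  have sd: "subst_apply (subst_apply v \<sigma>') \<delta> = subst_apply v \<sigma>" for v
    by (simp add: subst_subst d[rule_format, symmetric])
  have nv: "p = [] \<longrightarrow> \<not> is_variant (l1, r1) (l, r)"
  proof
    assume "p = []"
    have "x = []" if "x \<in> P" for x
    proof (rule ccontr)
      assume "x \<noteq> []"
      then have "parallel_pos [] x" using c(7) pP that \<open>p = []\<close> by metis
      then show False unfolding parallel_pos_def by simp
    qed
    then have "P = {[]}" using pP \<open>p = []\<close> by blast
    then show "\<not> is_variant (l1, r1) (l, r)" using c(9) rlp \<open>p = []\<close> by simp
  qed
  define s' where "s' = subst_apply l \<sigma>'"
  define t' where "t' = replace_at (subst_apply l \<sigma>') p (subst_apply r1 \<sigma>')"
  define u' where "u' = subst_apply r \<sigma>'"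
  have cp: "critical_peak R t' s' u'" unfolding critical_peak_def
    apply (rule exI[of _ l1], rule exI[of _ r1], rule exI[of _ l], rule exI[of _ r],
        rule exI[of _ p], rule exI[of _ \<sigma>'])
    using c(1) c(2)[rule_format, OF pP] c(3)[rule_format, OF pP] c(6) pP rlp mgu nv
    by (auto simp: s'_def t'_def u'_def)
  then have cps: "(s', t') \<in> CPS R" "(s', u') \<in> CPS R" unfolding CPS_def by auto
  have root: "(a, b) \<in> S \<Longrightarrow> (subst_apply a \<delta>, subst_apply b \<delta>) \<in> rstep S" for a b S
    unfolding rstep_def by (intro CollectI case_prodI exI[of _ a] exI[of _ b] exI[of _ "[]"] exI[of _ \<delta>]) auto
  have ss: "subst_apply s' \<delta> = s" using sd c(12) s'_def by simp
  have su: "(s, u) \<in> rstep (CPS R)" using root[OF cps(2)] ss sd c(14) u'_def by simp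
  define w where "w = replace_at (subst_apply l \<sigma>) p (subst_apply r1 \<sigma>)"
  have tw: "subst_apply t' \<delta> = w"
    using pos_subst[OF posl[OF pP], of \<sigma>' "subst_apply r1 \<sigma>'"] pos_subst[OF posl[OF pP], of \<sigma> r1]
      pos_subst[OF posl[OF pP], of \<sigma>' r1]
    unfolding t'_def w_def
    by (metis sd subst_subst)
  have tf: "t = foldr (\<lambda>q v. replace_at v q (subst_apply (snd (rl q)) \<sigma>)) qs w"
    using c(13) rlp unfolding ps w_def by simp
  have wt: "(w, t) \<in> (rstep R)\<^sup>*" unfolding tf
  proof (rule foldr_steps[OF pq(2)])
    show "\<forall>q\<in>set qs. \<forall>q'\<in>set qs. q \<noteq> q' \<longrightarrow> parallel_pos q q'" using c(7) qsP by blast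
    show "\<forall>q\<in>set qs. is_pos w q \<and> (subt_at w q, subst_apply (snd (rl q)) \<sigma>) \<in> rstep R"
    proof
      fix q assume q: "q \<in> set qs"
      then have "q \<in> P" "p \<noteq> q" using qsP pq(1) by auto
      then have par: "parallel_pos p q" using c(7) pP by blast
      have "is_pos (subst_apply l \<sigma>) q" using pos_subst[OF posl, of q \<sigma>] q qsP by auto
      note pr = parallel_replace[OF par this, of "subst_apply r1 \<sigma>"]
      have "subt_at w q = subst_apply (fst (rl q)) \<sigma>"
        using pr pos_subst[OF posl, of q \<sigma>] uni[of q] q qsP unfolding w_def by auto
      then show "is_pos w q \<and> (subt_at w q, subst_apply (snd (rl q)) \<sigma>) \<in> rstep R"
        using pr variant_step[of R "rl q" \<sigma>] c(2) q qsP unfolding w_def by auto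
    qed
  qed
  have "(s, w) \<in> rstep (CPS R)" using root[OF cps(1)] ss tw by simp
  then show ?thesis using wt su by blast
qed

lemma PCPS_step: "(a, b) \<in> PCPS R \<Longrightarrow> \<exists>c. (a, c) \<in> rstep (CPS R) \<and> (c, b) \<in> (rstep R)\<^sup>*"
  unfolding PCPS_def using pcp_key by blast

lemma rstep_PCPS: "rstep (PCPS R) \<subseteq> rstep (CPS R) O (rstep R)\<^sup>*"
proof clarify
  fix w w' assume "(w, w') \<in> rstep (PCPS R)"
  then obtain a b q \<theta> where ab: "(a, b) \<in> PCPS R" "is_pos w q" "subt_at w q = subst_apply a \<theta>"
    "w' = replace_at w q (subst_apply b \<theta>)" unfolding rstep_def by blast
  obtain c where c: "(a, c) \<in> rstep (CPS R)" "(c, b) \<in> (rstep R)\<^sup>*" using PCPS_step[OF ab(1)] by blast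
  let ?W = "replace_at w q (subst_apply c \<theta>)"
  have 1: "(w, ?W) \<in> rstep (CPS R)" by (rule rstep_closed[OF c(1) ab(2,3)])
  have "is_pos ?W q" "subt_at ?W q = subst_apply c \<theta>" using replace_same[OF ab(2)] by auto
  from rsteps_closed[OF c(2) this] have "(?W, w') \<in> (rstep R)\<^sup>*"
    using replace_same[OF ab(2)] ab(4) by simp
  with 1 show "(w, w') \<in> rstep (CPS R) O (rstep R)\<^sup>*" by blast
qed

theorem mainTheorem9:
  fixes R :: "('f, 'v) trs"
  assumes "infinite (UNIV :: 'v set)"
    and "wf_trs R"
  shows "relstep (CPS R) R = relstep (PCPS R) R \<and>
         (rel_terminating (CPS R) R \<longleftrightarrow> rel_terminating (PCPS R) R)"
proof -
  have 1: "relstep (CPS R) R \<subseteq> relstep (PCPS R) R"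
    unfolding relstep_def using rstep_mono[OF CPS_sub[of R]] by blast
  have "relstep (PCPS R) R \<subseteq> (rstep R)\<^sup>* O (rstep (CPS R) O (rstep R)\<^sup>*) O (rstep R)\<^sup>*"
    unfolding relstep_def using rstep_PCPS[of R] by blast
  also have "\<dots> \<subseteq> relstep (CPS R) R" unfolding relstep_def
    by clarify (meson relcompI rtrancl_trans)
  finally have "relstep (CPS R) R = relstep (PCPS R) R" using 1 by blast
  then show ?thesis unfolding rel_terminating_def by simp
qed
end
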